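(* Let $\alpha\in(0,1)$, $c>1$, let $\theta$ be an admissable function with respect to $\alpha$ and $c$, let $\phi$ be the Borel measure on $(0,\infty)$ with $\phi((t,\infty))=t^{-\alpha}\theta(\log t)$ for $t>0$, let $\widetilde\psi(x)=\int_0^\infty(1-e^{-xt})\,d\phi(t)$ and $G^\ast(x)=1/\widetilde\psi(x)$ for $x>0$. Then the primitive $G_I^\ast(x):=\int_0^x G^\ast(y)\,dy$ is a self-similar Bernstein function with respect to $1-\alpha\in(0,1)$ and $d:=c^{\frac{1-\alpha}{\alpha}}>1$, i.e. $G_I^\ast$ is a Bernstein function and $G_I^\ast(d^{\frac{1}{1-\alpha}}x)=d\cdot G_I^\ast(x)$ for all $x>0$.
   Context: A Bernstein function is a non-negative $C^\infty$ function $f$ on $(0,\infty)$ with $(-1)^{n-1}f^{(n)}(x)\ge0$ for all $n\in\mathbb{N}$, $x>0$. A function $\theta:\mathbb{R}\to\mathbb{R}$ is admissable with respect to $\alpha\in(0,1)$ and $c>1$ if $\theta(x)>0$ for all $x$, $t\mapsto t^{-\alpha}\theta(\log t)$ is non-increasing on $(0,\infty)$, and $\theta$ is $\log(c^{1/\alpha})$-periodic. *)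

theory Defs
  imports "HOL-Analysis.Analysis"
begin

definition bernstein :: "(real \<Rightarrow> real) \<Rightarrow> bool" where
  "bernstein f \<longleftrightarrow>
     (\<forall>x>0. f x \<ge> 0) \<and>
     (\<forall>n. \<forall>x>0. ((deriv ^^ n) f) differentiable (at x)) \<and>
     (\<forall>n\<ge>1. \<forall>x>0. (-1) ^ (n - 1) * (deriv ^^ n) f x \<ge> 0)"

definition admissable :: "real \<Rightarrow> real \<Rightarrow> (real \<Rightarrow> real) \<Rightarrow> bool" where
  "admissable \<alpha> c \<theta> \<longleftrightarrow>
     (\<forall>x. \<theta> x > 0) \<and>
     (\<forall>s t. 0 < s \<longrightarrow> s \<le> t \<longrightarrow> t powr (-\<alpha>) * \<theta> (ln t) \<le> s powr (-\<alpha>) * \<theta> (ln s)) \<and>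
     (\<forall>x. \<theta> (x + ln (c powr (1 / \<alpha>))) = \<theta> x)"

end

theory Submission
  imports Defs
begin


definition LS :: "(nat \<Rightarrow> real \<Rightarrow> real) \<Rightarrow> (nat \<Rightarrow> real \<Rightarrow> real) \<Rightarrow> nat \<Rightarrow> real \<Rightarrow> real" where
  "LS F H n y = (\<Sum>i=0..n. real (n choose i) * F i y * H (n-i) y)"

lemma LS_sum_eq:
  "(\<Sum>i=0..n. real (n choose i) * (F (Suc i) x * H (n-i) x + F i x * H (Suc (n-i)) x))
   = (\<Sum>i=0..Suc n. real (Suc n choose i) * F i x * H (Suc n - i) x)"
proof -
  have A: "(\<Sum>i=0..Suc n. real (Suc n choose i) * F i x * H (Suc n - i) x)
      = F 0 x * H (Suc n) x + (\<Sum>i=0..n. real (Suc n choose Suc i) * F (Suc i) x * H (n - i) x)"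
    by (subst sum.atLeast0_atMost_Suc_shift) simp
  have B: "(\<Sum>i=0..n. real (Suc n choose Suc i) * F (Suc i) x * H (n - i) x)
     = (\<Sum>i=0..n. real (n choose i) * F (Suc i) x * H (n - i) x)
       + (\<Sum>i=0..n. real (n choose Suc i) * F (Suc i) x * H (n - i) x)"
    by (simp add: sum.distrib[symmetric] algebra_simps)
  have C1: "(\<Sum>i=0..Suc n. real (n choose i) * F i x * H (Suc n - i) x) =
      F 0 x * H (Suc n) x + (\<Sum>i=0..n. real (n choose Suc i) * F (Suc i) x * H (n - i) x)"
    by (subst sum.atLeast0_atMost_Suc_shift) simp
  have C2: "(\<Sum>i=0..Suc n. real (n choose i) * F i x * H (Suc n - i) x)
     = (\<Sum>i=0..n. real (n choose i) * F i x * H (Suc n - i) x)"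
    by simp
  have D: "(\<Sum>i=0..n. real (n choose i) * (F (Suc i) x * H (n-i) x + F i x * H (Suc (n-i)) x))
     = (\<Sum>i=0..n. real (n choose i) * F (Suc i) x * H (n - i) x)
       + (\<Sum>i=0..n. real (n choose i) * F i x * H (Suc n - i) x)"
    by (simp add: sum.distrib[symmetric] algebra_simps Suc_diff_le)
  show ?thesis using A B C1 C2 D by linarith
qed

lemma LS_deriv:
  assumes "\<And>k. k \<le> n \<Longrightarrow> (F k has_real_derivative F (Suc k) x) (at x)"
      and "\<And>k. k \<le> n \<Longrightarrow> (H k has_real_derivative H (Suc k) x) (at x)"
  shows "(LS F H n has_real_derivative LS F H (Suc n) x) (at x)"
proof -
  have "((\<lambda>y. \<Sum>i=0..n. real (n choose i) * F i y * H (n-i) y) has_real_derivative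
     (\<Sum>i=0..n. real (n choose i) * (F (Suc i) x * H (n-i) x + F i x * H (Suc (n-i)) x))) (at x)"
  proof (rule DERIV_sum)
    fix i assume "i \<in> {0..n}"
    then have "i \<le> n" "n - i \<le> n" by auto
    have "((\<lambda>y. F i y * H (n-i) y) has_real_derivative
        (F (Suc i) x * H (n-i) x + F i x * H (Suc (n-i)) x)) (at x)"
      using DERIV_mult[OF assms(1)[OF \<open>i \<le> n\<close>] assms(2)[OF \<open>n - i \<le> n\<close>]] by (simp add: algebra_simps)
    from DERIV_cmult[OF this, of "real (n choose i)"]
    show "((\<lambda>y. real (n choose i) * F i y * H (n-i) y) has_real_derivative
        real (n choose i) * (F (Suc i) x * H (n-i) x + F i x * H (Suc (n-i)) x)) (at x)"
      by (simp add: mult.assoc)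
  qed
  then show ?thesis unfolding LS_def[abs_def] LS_sum_eq by simp
qed

function gs :: "(real \<Rightarrow> real) \<Rightarrow> (nat \<Rightarrow> real \<Rightarrow> real) \<Rightarrow> nat \<Rightarrow> real \<Rightarrow> real" where
  "gs f p 0 x = 1 / f x"
| "gs f p (Suc n) x = - (\<Sum>k=0..n. real (n choose k) * p k x *
      (\<Sum>l=0..n-k. real ((n-k) choose l) * gs f p l x * gs f p (n-k-l) x))"
  by pat_completeness auto
termination by (relation "Wellfounded.measure (\<lambda>(f,p,n,x). n)") auto

lemma gs_Suc_LS: "gs f p (Suc n) x = - LS p (LS (gs f p) (gs f p)) n x"
  by (simp add: LS_def sum_distrib_left mult.assoc)

lemma gs_deriv:
  assumes fpos: "\<And>x. x > 0 \<Longrightarrow> f x > 0"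
    and fder: "\<And>x. x > 0 \<Longrightarrow> (f has_real_derivative p 0 x) (at x)"
    and pder: "\<And>k x. x > 0 \<Longrightarrow> (p k has_real_derivative p (Suc k) x) (at x)"
  shows "\<forall>k\<le>n. \<forall>x>0. (gs f p k has_real_derivative gs f p (Suc k) x) (at x)"
proof (induction n)
  case 0
  have "(gs f p 0 has_real_derivative gs f p (Suc 0) x) (at x)" if "x > 0" for x
  proof -
    have e: "gs f p 0 = (\<lambda>x. 1 / f x)" by (rule ext) simp
    have "((\<lambda>x. 1 / f x) has_real_derivative - (p 0 x) / (f x)^2) (at x)"
      using fpos[OF that] fder[OF that]
      by (auto intro!: derivative_eq_intros simp: power2_eq_square)
    then show ?thesis unfolding e using fpos[OF that]
      by (simp add: power2_eq_square)
  qed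
  then show ?case by (simp del: gs.simps)
next
  case (Suc n)
  have "(gs f p (Suc n) has_real_derivative gs f p (Suc (Suc n)) x) (at x)" if "x > 0" for x
  proof -
    have e: "gs f p (Suc n) = (\<lambda>y. - LS p (LS (gs f p) (gs f p)) n y)"
      by (rule ext) (simp only: gs_Suc_LS)
    have H1: "(LS (gs f p) (gs f p) j has_real_derivative LS (gs f p) (gs f p) (Suc j) x) (at x)"
      if "j \<le> n" for j
      by (rule LS_deriv) (use Suc.IH that \<open>x > 0\<close> in auto)
    have "(LS p (LS (gs f p) (gs f p)) n has_real_derivative LS p (LS (gs f p) (gs f p)) (Suc n) x) (at x)"
      by (rule LS_deriv) (use H1 pder \<open>x > 0\<close> in auto)
    then show ?thesis unfolding e gs_Suc_LS[of f p "Suc n"]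
      by (intro DERIV_minus)
  qed
  then show ?case using Suc.IH le_Suc_eq by auto
qed

lemma gs_sign:
  assumes fpos: "\<And>x. x > 0 \<Longrightarrow> f x > 0"
    and psign: "\<And>k x. x > 0 \<Longrightarrow> (-1)^k * p k x \<ge> 0"
    and "x > 0"
  shows "(-1)^n * gs f p n x \<ge> 0"
proof (induction n rule: less_induct)
  case (less n)
  show ?case
  proof (cases n)
    case 0
    then show ?thesis using fpos[OF \<open>x > 0\<close>] by simp
  next
    case (Suc m)
    have "(-1)^n * gs f p n x = (\<Sum>k=0..m. real (m choose k) * ((-1)^k * p k x) *
      (\<Sum>l=0..m-k. real ((m-k) choose l) * ((-1)^l * gs f p l x) * ((-1)^(m-k-l) * gs f p (m-k-l) x)))"
    proof -
      have "(-1)^n * gs f p n x = (-1)^m * (\<Sum>k=0..m. (real (m choose k) * p k x *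
      (\<Sum>l=0..m-k. real ((m-k) choose l) * gs f p l x * gs f p (m-k-l) x)))"
        unfolding Suc by simp
      also have "\<dots> = (\<Sum>k=0..m. (-1)^m * (real (m choose k) * p k x *
      (\<Sum>l=0..m-k. real ((m-k) choose l) * gs f p l x * gs f p (m-k-l) x)))"
        by (rule sum_distrib_left)
      also have "\<dots> = (\<Sum>k=0..m. real (m choose k) * ((-1)^k * p k x) *
      (\<Sum>l=0..m-k. real ((m-k) choose l) * ((-1)^l * gs f p l x) * ((-1)^(m-k-l) * gs f p (m-k-l) x)))"
      proof (rule sum.cong[OF refl])
        fix k assume k: "k \<in> {0..m}"
        have "(-1::real)^m * (\<Sum>l=0..m-k. real ((m-k) choose l) * gs f p l x * gs f p (m-k-l) x)
           = (-1)^k * (\<Sum>l=0..m-k. real ((m-k) choose l) * ((-1)^l * gs f p l x) * ((-1)^(m-k-l) * gs f p (m-k-l) x))"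
          unfolding sum_distrib_left
        proof (rule sum.cong[OF refl])
          fix l assume l: "l \<in> {0..m-k}"
          have "(-1::real)^m = (-1)^k * ((-1)^l * (-1)^(m-k-l))"
            using k l by (simp add: power_add[symmetric])
          then show "(-1::real)^m * (real ((m-k) choose l) * gs f p l x * gs f p (m-k-l) x)
            = (-1)^k * (real ((m-k) choose l) * ((-1)^l * gs f p l x) * ((-1)^(m-k-l) * gs f p (m-k-l) x))"
            by (simp add: algebra_simps)
        qed
        then show "(-1)^m * (real (m choose k) * p k x *
          (\<Sum>l=0..m-k. real ((m-k) choose l) * gs f p l x * gs f p (m-k-l) x))
          = real (m choose k) * ((-1)^k * p k x) *
          (\<Sum>l=0..m-k. real ((m-k) choose l) * ((-1)^l * gs f p l x) * ((-1)^(m-k-l) * gs f p (m-k-l) x))"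
          by (simp add: algebra_simps)
      qed
      finally show ?thesis .
    qed
    also have "\<dots> \<ge> 0"
    proof (rule sum_nonneg)
      fix k assume k: "k \<in> {0..m}"
      have "(\<Sum>l=0..m-k. real ((m-k) choose l) * ((-1)^l * gs f p l x) * ((-1)^(m-k-l) * gs f p (m-k-l) x)) \<ge> 0"
      proof (rule sum_nonneg)
        fix l assume "l \<in> {0..m-k}"
        then have "l < n" "m - k - l < n" using Suc by auto
        then have "0 \<le> (-1)^l * gs f p l x" "0 \<le> (-1)^(m-k-l) * gs f p (m-k-l) x"
          using less.IH by auto
        then show "0 \<le> real ((m-k) choose l) * ((-1)^l * gs f p l x) * ((-1)^(m-k-l) * gs f p (m-k-l) x)"
          by simp
      qed
      moreover have "0 \<le> (-1)^k * p k x" using psign \<open>x > 0\<close> by auto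
      ultimately show "0 \<le> real (m choose k) * ((-1)^k * p k x) *
        (\<Sum>l=0..m-k. real ((m-k) choose l) * ((-1)^l * gs f p l x) * ((-1)^(m-k-l) * gs f p (m-k-l) x))"
        by simp
    qed
    finally show ?thesis .
  qed
qed

lemma higher_deriv_seq:
  assumes "\<And>n x. x > 0 \<Longrightarrow> (F n has_real_derivative F (Suc n) x) (at x)"
  shows "\<forall>x>0. (deriv ^^ n) (F 0) x = F n x"
proof (induction n)
  case 0 then show ?case by simp
next
  case (Suc n)
  show ?case
  proof (intro allI impI)
    fix x :: real assume "x > 0"
    have ev: "eventually (\<lambda>y. (deriv ^^ n) (F 0) y = F n y) (nhds x)"
      using Suc.IH \<open>x > 0\<close> eventually_nhds_in_open[of "{0<..}" x]
      by (auto elim!: eventually_mono)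
    have "(deriv ^^ Suc n) (F 0) x = deriv ((deriv ^^ n) (F 0)) x" by simp
    also have "\<dots> = deriv (F n) x" by (rule deriv_cong_ev[OF ev refl])
    also have "\<dots> = F (Suc n) x" using assms[OF \<open>x > 0\<close>] by (rule DERIV_imp_deriv)
    finally show "(deriv ^^ Suc n) (F 0) x = F (Suc n) x" .
  qed
qed

lemma higher_deriv_seq_diff:
  assumes "\<And>n x. x > 0 \<Longrightarrow> (F n has_real_derivative F (Suc n) x) (at x)" "x > 0"
  shows "((deriv ^^ n) (F 0)) differentiable (at x)"
proof -
  have "((deriv ^^ n) (F 0) has_real_derivative F (Suc n) x) (at x)"
    by (rule has_field_derivative_transform_within_open[of "F n" _ _ "{0<..}"])
      (use assms higher_deriv_seq[of F n] in auto)
  then show ?thesis using real_differentiable_def by blast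
qed




lemma exp_ge_term: "x \<ge> 0 \<Longrightarrow> x ^ n / fact n \<le> exp (x::real)"
proof -
  assume x: "x \<ge> 0"
  have "(\<Sum>k\<le>n. x ^ k / fact k) \<le> exp x"
    using x summable_exp_generic[of x]
    by (auto simp: exp_def divide_inverse ac_simps intro!: sum_le_suminf)
  moreover have "x ^ n / fact n \<le> (\<Sum>k\<le>n. x ^ k / fact k)"
    by (rule member_le_sum) (use x in auto)
  ultimately show ?thesis by linarith
qed

lemma powexp_bound:
  fixes a :: real
  assumes "a > 0" "m \<ge> 1"
  shows "\<exists>C\<ge>0. \<forall>t>0. t ^ m * exp (- a * t) \<le> C * min 1 t"
proof (intro exI[of _ "max 1 (fact m / a ^ m)"] conjI allI impI)
  fix t :: real assume t: "t > 0"
  show "t ^ m * exp (- a * t) \<le> max 1 (fact m / a ^ m) * min 1 t"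
  proof (cases "t \<le> 1")
    case True
    have "t ^ m \<le> t ^ 1" using True t assms(2) by (intro power_decreasing) auto
    moreover have "exp (- a * t) \<le> 1" using assms t by simp
    ultimately have "t ^ m * exp (- a * t) \<le> t"
      using t by (smt (verit) mult_left_le power_one_right zero_le_power)
    also have "t \<le> max 1 (fact m / a ^ m) * min 1 t" using True t by simp
    finally show ?thesis .
  next
    case False
    have "(a * t) ^ m / fact m \<le> exp (a * t)" using assms t by (intro exp_ge_term) simp
    then have "a ^ m * t ^ m \<le> fact m * exp (a * t)"
      by (simp add: field_simps power_mult_distrib)
    then have "t ^ m \<le> (fact m / a ^ m) * exp (a * t)"
      using assms by (simp add: field_simps)
    then have "t ^ m * exp (- a * t) \<le> fact m / a ^ m"
      by (simp add: exp_minus field_simps)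
    also have "\<dots> \<le> max 1 (fact m / a ^ m) * min 1 t" using False by simp
    finally show ?thesis .
  qed
qed simp

lemma t1: "(((1::real)/2)^Suc k) powr (-\<alpha>) = 2 powr \<alpha> * (2 powr \<alpha>) ^ k"
proof -
  have l: "ln (((1::real)/2)^Suc k) = - (real (Suc k) * ln 2)" by (simp add: ln_realpow ln_div algebra_simps)
  have "(((1::real)/2)^Suc k) powr (-\<alpha>) = exp (-\<alpha> * ln (((1::real)/2)^Suc k))"
    by (simp add: powr_def)
  also have "\<dots> = exp (\<alpha> * ln 2) * exp (real k * (\<alpha> * ln 2))"
    unfolding l exp_add[symmetric] by (simp add: algebra_simps)
  also have "\<dots> = 2 powr \<alpha> * (2 powr \<alpha>) ^ k"
    by (simp add: powr_def exp_of_nat_mult)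
  finally show ?thesis .
qed
lemma t2: "(B::real) > 0 \<Longrightarrow> ennreal ((1/2)^k) * ennreal (B * (2 powr \<alpha> * (2 powr \<alpha>) ^ k)) = ennreal (B * 2 powr \<alpha> * (2 powr (\<alpha> - 1)) ^ k)"
proof -
  assume "B > 0"
  have e: "2 powr (\<alpha> - 1) = 2 powr \<alpha> / 2" by (simp add: powr_diff)
  have "(1/2)^k * (B * (2 powr \<alpha> * (2 powr \<alpha>) ^ k)) = B * 2 powr \<alpha> * (2 powr (\<alpha> - 1)) ^ k"
    unfolding e power_divide by (simp add: power_one_over)
  then show ?thesis using \<open>B > 0\<close> by (simp add: ennreal_mult[symmetric])
qed

locale setting =
  fixes \<alpha> c :: real and \<theta> :: "real \<Rightarrow> real" and \<phi> :: "real measure"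
  assumes a0: "0 < \<alpha>" and a1: "\<alpha> < 1" and c1: "c > 1"
    and adm: "admissable \<alpha> c \<theta>"
    and sets_phi: "sets \<phi> = sets borel"
    and neg0: "emeasure \<phi> {..0} = 0"
    and tail: "\<forall>t>0. emeasure \<phi> {t<..} = ennreal (t powr (-\<alpha>) * \<theta> (ln t))"
begin

definition lam where "lam = c powr (1 / \<alpha>)"
definition per where "per = ln lam"

lemma lam_gt1: "lam > 1" and per_pos: "per > 0"
proof -
  show "lam > 1" unfolding lam_def using powr_less_mono[of 0 "1/\<alpha>" c] c1 a0 by simp
  then show "per > 0" unfolding per_def by simp
qed

lemma theta_pos: "\<theta> x > 0" using adm unfolding admissable_def by auto

lemma theta_mono: "0 < s \<Longrightarrow> s \<le> t \<Longrightarrow> t powr (-\<alpha>) * \<theta> (ln t) \<le> s powr (-\<alpha>) * \<theta> (ln s)"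
  using adm unfolding admissable_def by auto

lemma theta_per: "\<theta> (x + per) = \<theta> x"
  using adm unfolding admissable_def per_def lam_def by auto

lemma theta_per_nat: "\<theta> (x + real k * per) = \<theta> x"
proof (induction k)
  case (Suc k)
  have "\<theta> (x + real (Suc k) * per) = \<theta> ((x + real k * per) + per)"
    by (simp add: algebra_simps)
  also have "\<dots> = \<theta> x" using Suc theta_per by simp
  finally show ?case .
qed simp

lemma theta_per_int: "\<theta> (x + real_of_int k * per) = \<theta> x"
proof (cases "k \<ge> 0")
  case True
  then show ?thesis using theta_per_nat[of x "nat k"] by simp
next
  case False
  have "\<theta> x = \<theta> ((x + real_of_int k * per) + real (nat (-k)) * per)"
    using False by (simp add: algebra_simps)
  also have "\<dots> = \<theta> (x + real_of_int k * per)" by (rule theta_per_nat)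
  finally show ?thesis by simp
qed

definition B where "B = c * \<theta> 0"

lemma theta_le: "\<theta> x \<le> B"
proof -
  define k where "k = \<lfloor>x / per\<rfloor>"
  define y where "y = x - real_of_int k * per"
  have y0: "0 \<le> y" and yp: "y < per"
  proof -
    have "real_of_int k \<le> x / per" "x / per < real_of_int k + 1" unfolding k_def by linarith+
    then show "0 \<le> y" "y < per" unfolding y_def using per_pos by (simp_all add: field_simps)
  qed
  have "\<theta> x = \<theta> y" using theta_per_int[of y k] unfolding y_def by simp
  have "exp y powr (-\<alpha>) * \<theta> (ln (exp y)) \<le> 1 powr (-\<alpha>) * \<theta> (ln 1)"
    using y0 by (intro theta_mono) auto
  then have "exp (- \<alpha> * y) * \<theta> y \<le> \<theta> 0" by (simp add: powr_def)
  then have "\<theta> y \<le> exp (\<alpha> * y) * \<theta> 0"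
    by (simp add: exp_minus field_simps)
  also have "exp (\<alpha> * y) \<le> exp (\<alpha> * per)" using yp a0 by simp
  also have "exp (\<alpha> * per) = c" unfolding per_def lam_def using c1 a0 by (simp add: ln_powr)
  finally show ?thesis using \<open>\<theta> x = \<theta> y\<close> theta_pos[of 0] unfolding B_def by (simp add: mult.commute)
qed

lemma B_pos: "B > 0" unfolding B_def using c1 theta_pos[of 0] by simp

definition F where "F t = t powr (-\<alpha>) * \<theta> (ln t)"

lemma F_le: "t > 0 \<Longrightarrow> F t \<le> B * t powr (-\<alpha>)"
  unfolding F_def using theta_le[of "ln t"] by (simp add: mult.commute mult_left_mono)

lemma F_nonneg: "F t \<ge> 0" unfolding F_def using theta_pos[of "ln t"] by simp

lemma meas_eq: "measurable \<phi> N = measurable borel N"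
  by (rule measurable_cong_sets[OF sets_phi refl])

lemma space_phi: "space \<phi> = UNIV"
  using sets_eq_imp_space_eq[OF sets_phi] by simp

lemma sets_phi_borel: "A \<in> sets borel \<Longrightarrow> A \<in> sets \<phi>"
  using sets_phi by simp

lemma ae_pos: "AE t in \<phi>. t > 0"
proof -
  have "{..0::real} \<in> sets \<phi>" using sets_phi by simp
  then have "{..0} \<in> null_sets \<phi>" using neg0 by (simp add: null_sets_def)
  moreover have "{x \<in> space \<phi>. \<not> 0 < x} \<subseteq> {..0}" by auto
  ultimately show ?thesis by (rule AE_I')
qed

end


context setting begin
lemma nn_min_finite: "(\<integral>\<^sup>+t. ennreal (min 1 t) \<partial>\<phi>) < \<infinity>"
proof -
  define I where "I k = {((1::real)/2) ^ Suc k <..}" for k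
  have I_sets: "I k \<in> sets \<phi>" for k unfolding I_def by (intro sets_phi_borel) simp
  have bound: "ennreal (min 1 t) \<le> (\<Sum>k. ennreal ((1/2)^k) * indicator (I k) t)" if t: "t > 0" for t
  proof -
    have ex: "\<exists>n. ((1::real)/2) ^ Suc n < t"
    proof -
      obtain n where "((1::real)/2) ^ n < t" using real_arch_pow_inv[of t "1/2"] t by auto
      moreover have "((1::real)/2) ^ Suc n \<le> (1/2) ^ n" by (rule power_decreasing) auto
      ultimately have "((1::real)/2) ^ Suc n < t" by linarith
      then show ?thesis by blast
    qed
    obtain m where m: "((1::real)/2) ^ Suc m < t" "\<And>j. j < m \<Longrightarrow> \<not> ((1::real)/2) ^ Suc j < t"
      using ex_least_nat_le[of "\<lambda>n. ((1::real)/2) ^ Suc n < t"] ex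
      by (metis exists_least_iff)
    have le: "min 1 t \<le> (1/2) ^ m"
    proof (cases m)
      case 0 then show ?thesis by simp
    next
      case (Suc j)
      then have "\<not> ((1::real)/2) ^ Suc j < t" using m(2) by simp
      then show ?thesis using Suc by simp
    qed
    have "ennreal (min 1 t) \<le> ennreal ((1/2)^m) * indicator (I m) t"
      using le m(1) unfolding I_def by (simp add: indicator_def)
    also have "\<dots> \<le> (\<Sum>k. ennreal ((1/2)^k) * indicator (I k) t)"
    proof -
      define f where "f k = ennreal ((1/2)^k) * indicator (I k) t" for k
      have "sum f {m} \<le> suminf f" by (rule sum_le_suminf) (auto intro: summableI)
      moreover have "sum f {m} = f m" by simp
      ultimately have "f m \<le> suminf f" by simp
      then show ?thesis unfolding f_def .
    qed
    finally show ?thesis .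
  qed
  have "(\<integral>\<^sup>+t. ennreal (min 1 t) \<partial>\<phi>) \<le> (\<integral>\<^sup>+t. (\<Sum>k. ennreal ((1/2)^k) * indicator (I k) t) \<partial>\<phi>)"
  proof (rule nn_integral_mono_AE)
    show "AE t in \<phi>. ennreal (min 1 t) \<le> (\<Sum>k. ennreal ((1/2)^k) * indicator (I k) t)"
      using ae_pos by eventually_elim (rule bound)
  qed
  also have "\<dots> = (\<Sum>k. \<integral>\<^sup>+t. ennreal ((1/2)^k) * indicator (I k) t \<partial>\<phi>)"
    by (rule nn_integral_suminf) (use I_sets in auto)
  also have "\<dots> = (\<Sum>k. ennreal ((1/2)^k) * emeasure \<phi> (I k))"
    using I_sets by (simp add: nn_integral_cmult_indicator)
  also have "\<dots> \<le> (\<Sum>k. ennreal (B * 2 powr \<alpha> * (2 powr (\<alpha> - 1)) ^ k))"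
  proof (rule suminf_le)
    fix k
    have "emeasure \<phi> (I k) = ennreal (F ((1/2)^Suc k))"
      unfolding I_def F_def using tail by simp
    also have "F ((1/2)^Suc k) \<le> B * (((1::real)/2)^Suc k) powr (-\<alpha>)" by (rule F_le) simp
    also have "(((1::real)/2)^Suc k) powr (-\<alpha>) = 2 powr \<alpha> * (2 powr \<alpha>) ^ k"
      by (rule t1)
    finally have "emeasure \<phi> (I k) \<le> ennreal (B * (2 powr \<alpha> * (2 powr \<alpha>) ^ k))"
      by (simp add: ennreal_leI)
    then have "ennreal ((1/2)^k) * emeasure \<phi> (I k) \<le> ennreal ((1/2)^k) * ennreal (B * (2 powr \<alpha> * (2 powr \<alpha>) ^ k))"
      by (rule mult_left_mono) simp
    also have "\<dots> = ennreal (B * 2 powr \<alpha> * (2 powr (\<alpha> - 1)) ^ k)"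
      using B_pos by (rule t2)
    finally show "ennreal ((1/2)^k) * emeasure \<phi> (I k) \<le> ennreal (B * 2 powr \<alpha> * (2 powr (\<alpha> - 1)) ^ k)" .
  qed (auto intro: summableI)
  also have "\<dots> = ennreal (\<Sum>k. B * 2 powr \<alpha> * (2 powr (\<alpha> - 1)) ^ k)"
  proof (rule suminf_ennreal2)
    show "summable (\<lambda>k. B * 2 powr \<alpha> * (2 powr (\<alpha> - 1)) ^ k)"
    proof (intro summable_mult summable_geometric)
      have "2 powr (\<alpha> - 1) < 2 powr 0" using a1 by (intro powr_less_mono) auto
      then show "norm (2 powr (\<alpha> - 1)) < (1::real)" by simp
    qed
  qed (use B_pos in auto)
  also have "\<dots> < \<infinity>" by simp
  finally show ?thesis .
qed

lemma integrable_min: "integrable \<phi> (\<lambda>t. min 1 t)"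
proof (rule integrableI_bounded)
  show "(\<lambda>t. min 1 t) \<in> borel_measurable \<phi>" unfolding meas_eq by simp
  have "(\<integral>\<^sup>+t. ennreal (norm (min 1 t)) \<partial>\<phi>) = (\<integral>\<^sup>+t. ennreal (min 1 t) \<partial>\<phi>)"
    using ae_pos by (intro nn_integral_cong_AE) (auto elim!: eventually_mono)
  then show "(\<integral>\<^sup>+t. ennreal (norm (min 1 t)) \<partial>\<phi>) < \<infinity>" using nn_min_finite by simp
qed

lemma integrable_by_min:
  assumes "h \<in> borel_measurable borel" "C \<ge> 0" "\<And>t. t > 0 \<Longrightarrow> \<bar>h t\<bar> \<le> C * min 1 t"
  shows "integrable \<phi> h"
proof -
  have i1: "integrable \<phi> (\<lambda>t. C * min 1 t)" using integrable_min by simp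
  have m: "h \<in> borel_measurable \<phi>" unfolding meas_eq by fact
  have ae: "AE x in \<phi>. norm (h x) \<le> norm (C * min 1 x)"
    using ae_pos by eventually_elim (use assms in \<open>auto simp: abs_mult\<close>)
  show ?thesis by (rule Bochner_Integration.integrable_bound[OF i1 m ae])
qed

end



lemma deriv_under_integral:
  fixes M :: "real measure" and K K' :: "real \<Rightarrow> real \<Rightarrow> real" and W :: "real \<Rightarrow> real"
  assumes x: "x > 0"
    and Kint: "\<And>y. y > 0 \<Longrightarrow> integrable M (K y)"
    and K'meas: "K' x \<in> borel_measurable M"
    and Wint: "integrable M W"
    and der: "\<And>y t. y > 0 \<Longrightarrow> t > 0 \<Longrightarrow> ((\<lambda>y. K y t) has_real_derivative K' y t) (at y)"
    and bnd: "\<And>y t. x/2 \<le> y \<Longrightarrow> y \<le> 2*x \<Longrightarrow> t > 0 \<Longrightarrow> \<bar>K' y t\<bar> \<le> W t"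
    and pos: "AE t in M. t > 0"
  shows "((\<lambda>y. \<integral>t. K y t \<partial>M) has_real_derivative (\<integral>t. K' x t \<partial>M)) (at x)"
  unfolding has_field_derivative_iff tendsto_at_iff_sequentially
proof (intro allI impI)
  fix X :: "nat \<Rightarrow> real"
  assume Xne: "\<forall>i. X i \<in> UNIV - {x}" and Xlim: "X \<longlonglongrightarrow> x"
  have "eventually (\<lambda>n. dist (X n) x < x/2) sequentially"
    using Xlim x unfolding tendsto_iff by (meson half_gt_zero)
  then obtain N where N: "\<And>n. n \<ge> N \<Longrightarrow> \<bar>X n - x\<bar> < x/2"
    by (auto simp: eventually_sequentially dist_real_def)
  define Y where "Y n = X (n + N)" for n
  have Yclose: "\<bar>Y n - x\<bar> < x/2" for n unfolding Y_def by (rule N) simp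
  have Yne: "Y n \<noteq> x" for n using Xne unfolding Y_def by auto
  have Ypos: "Y n > 0" for n using Yclose[of n] by linarith
  have Ylim: "Y \<longlonglongrightarrow> x" unfolding Y_def by (rule LIMSEQ_ignore_initial_segment[OF Xlim])
  define s where "s n t = (K (Y n) t - K x t) / (Y n - x)" for n t
  have eq: "((\<integral>t. K (Y n) t \<partial>M) - (\<integral>t. K x t \<partial>M)) / (Y n - x) = (\<integral>t. s n t \<partial>M)" for n
    unfolding s_def using Kint[OF Ypos[of n]] Kint[OF x] by simp
  have "(\<lambda>n. \<integral>t. s n t \<partial>M) \<longlonglongrightarrow> (\<integral>t. K' x t \<partial>M)"
  proof (rule integral_dominated_convergence[where w=W])
    show "K' x \<in> borel_measurable M" by fact
    show "s n \<in> borel_measurable M" for n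
      unfolding s_def using Kint[OF Ypos[of n]] Kint[OF x]
      by (intro borel_measurable_integrable) simp
    show "integrable M W" by fact
    show "AE t in M. (\<lambda>n. s n t) \<longlonglongrightarrow> K' x t"
      using pos
    proof eventually_elim
      fix t :: real assume t: "t > 0"
      have "((\<lambda>y. (K y t - K x t) / (y - x)) \<longlongrightarrow> K' x t) (at x)"
        using der[OF x t] unfolding has_field_derivative_iff .
      then have "((\<lambda>y. (K y t - K x t) / (y - x)) \<circ> Y) \<longlonglongrightarrow> K' x t"
        unfolding tendsto_at_iff_sequentially using Yne Ylim by auto
      then show "(\<lambda>n. s n t) \<longlonglongrightarrow> K' x t" unfolding s_def comp_def .
    qed
    show "AE t in M. norm (s n t) \<le> W t" for n
      using pos
    proof eventually_elim
      fix t :: real assume t: "t > 0"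
      define a where "a = min x (Y n)"
      define b where "b = max x (Y n)"
      have ab: "a < b" using Yne[of n] unfolding a_def b_def by auto
      have "\<exists>z. a < z \<and> z < b \<and> K b t - K a t = (b - a) * K' z t"
      proof (rule MVT2[OF ab])
        fix z assume "a \<le> z" "z \<le> b"
        then have "z > 0" using x Ypos[of n] unfolding a_def by auto
        then show "((\<lambda>y. K y t) has_real_derivative K' z t) (at z)" using der t by auto
      qed
      then obtain z where z: "a < z" "z < b" "K b t - K a t = (b - a) * K' z t" by blast
      have "s n t = K' z t"
      proof -
        have "s n t = (K b t - K a t) / (b - a)"
          unfolding s_def a_def b_def using Yne[of n]
          by (cases "x \<le> Y n") (auto simp: min_def max_def field_simps)
        also have "\<dots> = K' z t" using z ab by simp
        finally show ?thesis .
      qed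
      moreover have "x/2 \<le> z" "z \<le> 2*x"
        using z Yclose[of n] x unfolding a_def b_def by (auto simp: min_def max_def abs_if split: if_splits)
      ultimately show "norm (s n t) \<le> W t" using bnd t by simp
    qed
  qed
  then have "(\<lambda>n. ((\<integral>t. K (Y n) t \<partial>M) - (\<integral>t. K x t \<partial>M)) / (Y n - x)) \<longlonglongrightarrow> (\<integral>t. K' x t \<partial>M)"
    unfolding eq .
  then show "((\<lambda>y. ((\<integral>t. K y t \<partial>M) - (\<integral>t. K x t \<partial>M)) / (y - x)) \<circ> X) \<longlonglongrightarrow> (\<integral>t. K' x t \<partial>M)"
    unfolding Y_def comp_def by (rule LIMSEQ_offset)
qed



context setting begin

definition psi where "psi x = (\<integral>t. (1 - exp (- x * t)) \<partial>\<phi>)"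
definition Dn where "Dn n x = (\<integral>t. t ^ n * exp (- x * t) \<partial>\<phi>)"

lemma meas_phi_borel: "f \<in> borel_measurable borel \<Longrightarrow> f \<in> borel_measurable \<phi>"
  unfolding meas_eq .

lemma int_Dn:
  assumes "n \<ge> 1" "x > 0"
  shows "integrable \<phi> (\<lambda>t. t ^ n * exp (- x * t))"
proof -
  obtain C where C: "C \<ge> 0" "\<And>t. t > 0 \<Longrightarrow> t ^ n * exp (- x * t) \<le> C * min 1 t"
    using powexp_bound[OF assms(2) assms(1)] by blast
  show ?thesis
  proof (rule integrable_by_min[OF _ C(1)])
    show "(\<lambda>t. t ^ n * exp (- x * t)) \<in> borel_measurable borel" by measurable
    fix t :: real assume "t > 0"
    then show "\<bar>t ^ n * exp (- x * t)\<bar> \<le> C * min 1 t" using C(2)[of t] by simp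
  qed
qed

lemma int_psi:
  assumes "x > 0"
  shows "integrable \<phi> (\<lambda>t. 1 - exp (- x * t))"
proof (rule integrable_by_min[where C="max 1 x"])
  show "(\<lambda>t. 1 - exp (- x * t)) \<in> borel_measurable borel" by measurable
  show "0 \<le> max 1 x" by simp
  fix t :: real assume t: "t > 0"
  have "exp (- x * t) \<le> 1" using assms t by simp
  moreover have "1 - x * t \<le> exp (- x * t)" using exp_ge_add_one_self[of "- x * t"] by simp
  ultimately have "\<bar>1 - exp (- x * t)\<bar> \<le> min 1 (x * t)" by simp
  also have "\<dots> \<le> max 1 x * min 1 t"
  proof (cases "x \<le> 1")
    case True
    have "x * t \<le> t" using True t by (simp add: mult_right_le_one_le mult_le_cancel_right1)
    then show ?thesis using True by auto
  next
    case False
    show ?thesis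
    proof (cases "t \<le> 1")
      case True
      then show ?thesis using False by auto
    next
      case tf: False
      then have "min 1 (x * t) \<le> 1" by simp
      then show ?thesis using False tf by auto
    qed
  qed
  finally show "\<bar>1 - exp (- x * t)\<bar> \<le> max 1 x * min 1 t" .
qed

lemma psi_deriv:
  assumes x: "x > 0"
  shows "(psi has_real_derivative Dn 1 x) (at x)"
proof -
  have "((\<lambda>y. \<integral>t. (1 - exp (- y * t)) \<partial>\<phi>) has_real_derivative (\<integral>t. t * exp (- x * t) \<partial>\<phi>)) (at x)"
  proof (rule deriv_under_integral[where W="\<lambda>t. t ^ 1 * exp (- (x/2) * t)"])
    show "integrable \<phi> (\<lambda>t. 1 - exp (- y * t))" if "y > 0" for y using int_psi that .
    show "(\<lambda>t. t * exp (- x * t)) \<in> borel_measurable \<phi>" by (intro meas_phi_borel) measurable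
    show "integrable \<phi> (\<lambda>t. t ^ 1 * exp (- (x/2) * t))" using x by (intro int_Dn) auto
    show "((\<lambda>y. 1 - exp (- y * t)) has_real_derivative t * exp (- y * t)) (at y)" for y t
      by (auto intro!: derivative_eq_intros)
    show "\<bar>t * exp (- y * t)\<bar> \<le> t ^ 1 * exp (- (x/2) * t)" if "x/2 \<le> y" "t > 0" for y t
      using that by (simp add: mult_left_mono)
  qed (use x ae_pos in auto)
  then show ?thesis unfolding psi_def[abs_def] Dn_def by simp
qed

lemma Dn_deriv:
  assumes n: "n \<ge> 1" and x: "x > 0"
  shows "(Dn n has_real_derivative - Dn (Suc n) x) (at x)"
proof -
  have "((\<lambda>y. \<integral>t. t ^ n * exp (- y * t) \<partial>\<phi>) has_real_derivative (\<integral>t. - (t ^ Suc n * exp (- x * t)) \<partial>\<phi>)) (at x)"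
  proof (rule deriv_under_integral[where W="\<lambda>t. t ^ Suc n * exp (- (x/2) * t)"])
    show "integrable \<phi> (\<lambda>t. t ^ n * exp (- y * t))" if "y > 0" for y using int_Dn n that .
    show "(\<lambda>t. - (t ^ Suc n * exp (- x * t))) \<in> borel_measurable \<phi>" by (intro meas_phi_borel) measurable
    show "integrable \<phi> (\<lambda>t. t ^ Suc n * exp (- (x/2) * t))" using x by (intro int_Dn) auto
    show "((\<lambda>y. t ^ n * exp (- y * t)) has_real_derivative - (t ^ Suc n * exp (- y * t))) (at y)" for y t
      by (auto intro!: derivative_eq_intros)
    show "\<bar>- (t ^ Suc n * exp (- y * t))\<bar> \<le> t ^ Suc n * exp (- (x/2) * t)" if "x/2 \<le> y" "t > 0" for y t
      using that by (simp add: mult_left_mono)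
  qed (use x ae_pos in auto)
  then show ?thesis unfolding Dn_def[abs_def] by simp
qed

lemma Dn_nonneg: "Dn n x \<ge> 0"
  unfolding Dn_def
  by (rule integral_nonneg_AE) (use ae_pos in \<open>auto elim!: eventually_mono\<close>)

lemma measure_tail1: "measure \<phi> {1<..} = \<theta> 0"
  using tail theta_pos[of 0] by (simp add: measure_def)

lemma psi_pos:
  assumes x: "x > 0"
  shows "psi x > 0"
proof -
  have A: "{1::real<..} \<in> sets \<phi>" by (intro sets_phi_borel) simp
  have fin: "emeasure \<phi> {1<..} < \<infinity>" using tail by simp
  have int1: "integrable \<phi> (\<lambda>t. indicator {1<..} t * (1 - exp (- x)))"
    using A fin by (intro integrable_mult_left integrable_real_indicator) auto
  have "(\<integral>t. indicator {1<..} t * (1 - exp (- x)) \<partial>\<phi>) \<le> psi x"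
    unfolding psi_def
  proof (rule integral_mono_AE[OF int1 int_psi[OF x]])
    show "AE t in \<phi>. indicator {1<..} t * (1 - exp (- x)) \<le> 1 - exp (- x * t)"
      using ae_pos
    proof eventually_elim
      fix t :: real assume t: "t > 0"
      show "indicator {1<..} t * (1 - exp (- x)) \<le> 1 - exp (- x * t)"
      proof (cases "t > 1")
        case True
        then have "exp (- x * t) \<le> exp (- x)" using x by simp
        then show ?thesis using True by simp
      next
        case False
        then show ?thesis using t x by simp
      qed
    qed
  qed
  moreover have "(\<integral>t. indicator {1<..} t * (1 - exp (- x)) \<partial>\<phi>) = \<theta> 0 * (1 - exp (- x))"
    using A fin by (simp add: measure_tail1)
  moreover have "\<theta> 0 * (1 - exp (- x)) > 0" using theta_pos[of 0] x by simp
  ultimately show ?thesis by linarith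
qed

definition P where "P k x = (if k = 0 then psi x else (-1)^(k-1) * Dn k x)"
definition pp where "pp k x = P (Suc k) x"

lemma pp_simp: "pp k x = (-1)^k * Dn (Suc k) x" unfolding pp_def P_def by simp

lemma fder: "x > 0 \<Longrightarrow> (psi has_real_derivative pp 0 x) (at x)"
  unfolding pp_simp using psi_deriv by simp

lemma pder: "x > 0 \<Longrightarrow> (pp k has_real_derivative pp (Suc k) x) (at x)"
proof -
  assume x: "x > 0"
  have "((\<lambda>x. (-1)^k * Dn (Suc k) x) has_real_derivative (-1)^k * (- Dn (Suc (Suc k)) x)) (at x)"
    by (intro DERIV_cmult Dn_deriv x) simp
  moreover have "pp k = (\<lambda>x. (-1)^k * Dn (Suc k) x)" by (rule ext) (simp add: pp_simp)
  ultimately show ?thesis by (simp add: pp_simp)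
qed

lemma psign: "x > 0 \<Longrightarrow> (-1)^k * pp k x \<ge> 0"
  by (simp add: pp_simp Dn_nonneg flip: mult.assoc power_add)

end


context setting begin

lemma lam_pos: "lam > 0" using lam_gt1 by simp

lemma lam_powr: "lam powr \<alpha> = c"
  unfolding lam_def using a0 c1 by (simp add: powr_powr)

lemma per_eq: "per = ln lam" unfolding per_def ..

lemma F_scale: "m > 0 \<Longrightarrow> F (m / lam) = c * F m"
proof -
  assume m: "m > 0"
  have "(m / lam) powr (-\<alpha>) = m powr (-\<alpha>) / lam powr (-\<alpha>)"
    by (rule powr_divide)
  also have "\<dots> = m powr (-\<alpha>) * lam powr \<alpha>"
    by (simp add: powr_minus divide_inverse)
  finally have "(m / lam) powr (-\<alpha>) = m powr (-\<alpha>) * lam powr \<alpha>" .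
  moreover have "\<theta> (ln (m / lam)) = \<theta> (ln m)"
  proof -
    have "ln (m / lam) = ln m - per" using m lam_pos by (simp add: ln_div per_eq)
    then show ?thesis using theta_per[of "ln m - per"] by simp
  qed
  ultimately show ?thesis unfolding F_def lam_powr by simp
qed

definition nu where "nu = distr \<phi> borel (\<lambda>t. lam * t)"

lemma mult_meas: "(\<lambda>t. lam * t) \<in> measurable \<phi> borel"
  unfolding meas_eq by simp

lemma sets_nu: "sets nu = sets borel" unfolding nu_def by simp

lemma nu_emeasure: "X \<in> sets borel \<Longrightarrow> emeasure nu X = emeasure \<phi> ((\<lambda>t. lam * t) -` X)"
  unfolding nu_def by (subst emeasure_distr[OF mult_meas]) (auto simp: space_phi)

lemma pre_tail: "m > 0 \<Longrightarrow> (\<lambda>t. lam * t) -` {m<..} = {m / lam<..}"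
  using lam_pos by (auto simp: field_simps)

lemma pre_neg: "(\<lambda>t. lam * t) -` {..0} = {..0::real}"
  using lam_pos by (auto simp: mult_le_0_iff)

definition dphi where "dphi = density \<phi> (\<lambda>_. ennreal c)"

lemma sets_dphi: "sets dphi = sets borel" unfolding dphi_def using sets_phi by simp

lemma dphi_emeasure: "X \<in> sets borel \<Longrightarrow> emeasure dphi X = ennreal c * emeasure \<phi> X"
  unfolding dphi_def by (rule emeasure_density_const) (use sets_phi in simp)

lemma tail_F: "t > 0 \<Longrightarrow> emeasure \<phi> {t<..} = ennreal (F t)"
  using tail unfolding F_def by simp

lemma nu_tail: "m > 0 \<Longrightarrow> emeasure nu {m<..} = ennreal (c * F m)"
  using nu_emeasure[of "{m<..}"] pre_tail[of m] tail_F[of "m / lam"] F_scale[of m] lam_pos by simp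

lemma dphi_tail: "m > 0 \<Longrightarrow> emeasure dphi {m<..} = ennreal (c * F m)"
  using dphi_emeasure[of "{m<..}"] tail_F[of m] c1 F_nonneg[of m] by (simp add: ennreal_mult)

lemma restr_eq:
  assumes a: "a > 0"
  shows "density nu (indicator {a<..}) = density dphi (indicator {a<..})"
proof (rule measure_eqI_lessThan)
  show "sets (density nu (indicator {a<..})) = sets borel" by (simp add: sets_nu)
  show "sets (density dphi (indicator {a<..})) = sets borel" by (simp add: sets_dphi)
  fix x :: real
  define m where "m = max a x"
  have m: "m > 0" unfolding m_def using a by simp
  have I: "{a<..} \<inter> {x<..} = {m<..}" unfolding m_def by auto
  have "emeasure (density nu (indicator {a<..})) {x<..} = emeasure nu {m<..}"
    by (subst emeasure_restricted) (auto simp: sets_nu I)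
  also have "\<dots> = ennreal (c * F m)" by (rule nu_tail[OF m])
  finally have e1: "emeasure (density nu (indicator {a<..})) {x<..} = ennreal (c * F m)" .
  have "emeasure (density dphi (indicator {a<..})) {x<..} = emeasure dphi {m<..}"
    by (subst emeasure_restricted) (auto simp: sets_dphi I)
  also have "\<dots> = ennreal (c * F m)" by (rule dphi_tail[OF m])
  finally have e2: "emeasure (density dphi (indicator {a<..})) {x<..} = ennreal (c * F m)" .
  show "emeasure (density nu (indicator {a<..})) {x<..} < \<infinity>" using e1 by simp
  show "emeasure (density nu (indicator {a<..})) {x<..} = emeasure (density dphi (indicator {a<..})) {x<..}"
    using e1 e2 by simp
qed

lemma restr_eq': "a > 0 \<Longrightarrow> X \<in> sets borel \<Longrightarrow> emeasure nu ({a<..} \<inter> X) = emeasure dphi ({a<..} \<inter> X)"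
proof -
  assume a: "a > 0" and X: "X \<in> sets borel"
  have "emeasure nu ({a<..} \<inter> X) = emeasure (density nu (indicator {a<..})) X"
    by (subst emeasure_restricted) (use X in \<open>auto simp: sets_nu\<close>)
  also have "\<dots> = emeasure (density dphi (indicator {a<..})) X" using restr_eq[OF a] by simp
  also have "\<dots> = emeasure dphi ({a<..} \<inter> X)"
    by (subst emeasure_restricted) (use X in \<open>auto simp: sets_dphi\<close>)
  finally show ?thesis .
qed

lemma nu_eq: "nu = dphi"
proof (rule measure_eqI)
  show "sets nu = sets dphi" by (simp add: sets_nu sets_dphi)
  fix X assume "X \<in> sets nu"
  then have X: "X \<in> sets borel" by (simp add: sets_nu)
  have neg_nu: "emeasure nu (X \<inter> {..0}) = 0"
  proof -
    have "emeasure nu (X \<inter> {..0}) \<le> emeasure nu {..0}"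
      by (rule emeasure_mono) (auto simp: sets_nu)
    also have "\<dots> = 0" using nu_emeasure[of "{..0}"] pre_neg neg0 by simp
    finally show ?thesis by simp
  qed
  have neg_d: "emeasure dphi (X \<inter> {..0}) = 0"
  proof -
    have "emeasure dphi (X \<inter> {..0}) \<le> emeasure dphi {..0}"
      by (rule emeasure_mono) (auto simp: sets_dphi)
    also have "\<dots> = 0" using dphi_emeasure[of "{..0}"] neg0 by simp
    finally show ?thesis by simp
  qed
  define A where "A n = {1 / real (Suc n)<..} \<inter> X" for n
  have Aset: "range A \<subseteq> sets borel" unfolding A_def using X by auto
  have Ainc: "incseq A"
  proof (rule incseq_SucI)
    fix n
    have "1 / real (Suc (Suc n)) \<le> 1 / real (Suc n)" by (intro divide_left_mono) auto
    then show "A n \<subseteq> A (Suc n)" unfolding A_def by auto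
  qed
  have AU: "(\<Union>n. A n) = X \<inter> {0<..}"
  proof
    show "(\<Union>n. A n) \<subseteq> X \<inter> {0<..}"
    proof
      fix t assume "t \<in> (\<Union>n. A n)"
      then obtain n where n: "1 / real (Suc n) < t" "t \<in> X" unfolding A_def by auto
      have "0 < 1 / real (Suc n)" by simp
      then have "0 < t" using n(1) by linarith
      then show "t \<in> X \<inter> {0<..}" using n(2) by auto
    qed
    show "X \<inter> {0<..} \<subseteq> (\<Union>n. A n)"
    proof
      fix t assume t: "t \<in> X \<inter> {0<..}"
      then have "t > 0" by simp
      then obtain n where "inverse (real (Suc n)) < t" using reals_Archimedean by blast
      then have "1 / real (Suc n) < t" by (simp add: inverse_eq_divide)
      then show "t \<in> (\<Union>n. A n)" using t unfolding A_def by auto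
    qed
  qed
  have pos_eq: "emeasure nu (X \<inter> {0<..}) = emeasure dphi (X \<inter> {0<..})"
  proof -
    have "emeasure nu (X \<inter> {0<..}) = (SUP n. emeasure nu (A n))"
      using SUP_emeasure_incseq[of A nu] Aset Ainc AU by (simp add: sets_nu)
    also have "\<dots> = (SUP n. emeasure dphi (A n))"
      unfolding A_def using restr_eq' X by simp
    also have "\<dots> = emeasure dphi (X \<inter> {0<..})"
      using SUP_emeasure_incseq[of A dphi] Aset Ainc AU by (simp add: sets_dphi)
    finally show ?thesis .
  qed
  have split: "X = (X \<inter> {..0}) \<union> (X \<inter> {0<..})" by auto
  have "emeasure nu X = emeasure nu (X \<inter> {..0}) + emeasure nu (X \<inter> {0<..})"
    by (subst split, rule plus_emeasure[symmetric]) (use X in \<open>auto simp: sets_nu\<close>)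
  also have "\<dots> = emeasure dphi (X \<inter> {..0}) + emeasure dphi (X \<inter> {0<..})"
    using neg_nu neg_d pos_eq by simp
  also have "\<dots> = emeasure dphi X"
    by (subst (3) split, rule plus_emeasure) (use X in \<open>auto simp: sets_dphi\<close>)
  finally show "emeasure nu X = emeasure dphi X" .
qed

lemma psi_scale:
  assumes u: "u > 0"
  shows "psi (lam * u) = c * psi u"
proof -
  have "psi (lam * u) = (\<integral>t. (1 - exp (- u * (lam * t))) \<partial>\<phi>)"
    unfolding psi_def by (simp add: algebra_simps)
  also have "\<dots> = (\<integral>s. (1 - exp (- u * s)) \<partial>nu)"
    unfolding nu_def by (rule integral_distr[symmetric, OF mult_meas]) simp
  also have "\<dots> = (\<integral>s. (1 - exp (- u * s)) \<partial>dphi)" by (simp add: nu_eq)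
  also have "\<dots> = (\<integral>s. c * (1 - exp (- u * s)) \<partial>\<phi>)"
    unfolding dphi_def
    by (subst integral_density) (use c1 in \<open>auto simp: meas_eq\<close>)
  also have "\<dots> = c * psi u" unfolding psi_def by simp
  finally show ?thesis .
qed

end



lemma bern_from_seq:
  assumes "\<And>n x. x > 0 \<Longrightarrow> (S n has_real_derivative S (Suc n) x) (at x)"
    and "\<And>x. x > 0 \<Longrightarrow> S 0 x \<ge> 0"
    and "\<And>n x. n \<ge> 1 \<Longrightarrow> x > 0 \<Longrightarrow> (-1) ^ (n - 1) * S n x \<ge> 0"
  shows "bernstein (S 0)"
  unfolding bernstein_def
proof (intro conjI allI impI)
  fix x :: real assume "x > 0" then show "S 0 x \<ge> 0" by (rule assms(2))
next
  fix n :: nat and x :: real assume x: "x > 0"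
  show "(deriv ^^ n) (S 0) differentiable (at x)" by (rule higher_deriv_seq_diff[of S, OF assms(1) x])
next
  fix n :: nat and x :: real assume "n \<ge> 1" "x > 0"
  then show "0 \<le> (-1) ^ (n - 1) * (deriv ^^ n) (S 0) x"
    using higher_deriv_seq[of S n, OF assms(1)] assms(3) by auto
qed

context setting begin

definition Gf where "Gf x = 1 / psi x"
definition GIn where "GIn x = (\<integral>y\<in>{0<..x}. Gf y \<partial>lborel)"

lemma gs0: "gs psi pp 0 = Gf" by (rule ext) (simp add: Gf_def)

lemma gsd: "x > 0 \<Longrightarrow> (gs psi pp k has_real_derivative gs psi pp (Suc k) x) (at x)"
  using gs_deriv[of psi pp k] psi_pos fder pder by blast

lemma gss: "x > 0 \<Longrightarrow> (-1) ^ k * gs psi pp k x \<ge> 0"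
  using gs_sign[of psi pp x k] psi_pos psign by blast

lemma Gf_deriv: "x > 0 \<Longrightarrow> (Gf has_real_derivative gs psi pp 1 x) (at x)"
  using gsd[of x 0] by (simp add: gs0)

lemma Gf_cont: "0 < a \<Longrightarrow> continuous_on {a..b} Gf"
  by (intro continuous_at_imp_continuous_on ballI DERIV_isCont[OF Gf_deriv]) auto

lemma Gf_pos: "x > 0 \<Longrightarrow> Gf x > 0" unfolding Gf_def using psi_pos by simp

lemma Gf_meas: "set_borel_measurable lborel {0<..x} Gf"
proof -
  have "(\<lambda>y. indicator {0<..x} y *\<^sub>R Gf y) \<in> borel_measurable borel"
  proof (rule borel_measurable_continuous_on_indicator)
    show "{0<..x} \<in> sets borel" by simp
    show "continuous_on {0<..x} Gf"
      by (intro continuous_at_imp_continuous_on ballI DERIV_isCont[OF Gf_deriv]) auto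
  qed
  then show ?thesis unfolding set_borel_measurable_def by simp
qed

lemma GI_nonneg: "GIn x \<ge> 0"
  unfolding GIn_def set_lebesgue_integral_def
  by (rule integral_nonneg_AE) (auto simp: indicator_def intro: less_imp_le Gf_pos)

lemma GI_scale:
  assumes x: "x > 0"
  shows "GIn (lam * x) = (lam / c) * GIn x"
proof -
  have "GIn (lam * x) = (\<integral>y. indicator {0<..lam * x} y * Gf y \<partial>lborel)"
    unfolding GIn_def set_lebesgue_integral_def by simp
  also have "\<dots> = \<bar>lam\<bar> *\<^sub>R (\<integral>u. indicator {0<..lam * x} (0 + lam * u) * Gf (0 + lam * u) \<partial>lborel)"
    by (rule lborel_integral_real_affine) (use lam_pos in simp)
  also have "(\<lambda>u. indicator {0<..lam * x} (0 + lam * u) * Gf (0 + lam * u)) = (\<lambda>u. (1 / c) * (indicator {0<..x} u * Gf u))"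
  proof
    fix u :: real
    show "indicator {0<..lam * x} (0 + lam * u) * Gf (0 + lam * u) = (1 / c) * (indicator {0<..x} u * Gf u)"
    proof (cases "0 < u \<and> u \<le> x")
      case True
      then have "0 + lam * u \<in> {0<..lam * x}" using lam_pos by (simp add: mult_left_mono)
      moreover have "Gf (lam * u) = Gf u / c" unfolding Gf_def using psi_scale True by simp
      ultimately show ?thesis using True by simp
    next
      case False
      then have "0 + lam * u \<notin> {0<..lam * x}" using lam_pos by (auto simp: zero_less_mult_iff)
      then show ?thesis using False by simp
    qed
  qed
  also have "\<bar>lam\<bar> *\<^sub>R (\<integral>u. (1 / c) * (indicator {0<..x} u * Gf u) \<partial>lborel) = (lam / c) * GIn x"
    unfolding GIn_def set_lebesgue_integral_def using lam_pos by simp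
  finally show ?thesis .
qed

lemma GI_zero_case:
  assumes ni: "\<not> set_integrable lborel {0<..1} Gf"
  shows "GIn = (\<lambda>_. 0)"
proof
  fix x :: real
  show "GIn x = 0"
  proof (cases "x > 0")
    case False
    then have "{0<..x} = {}" by auto
    then show ?thesis unfolding GIn_def set_lebesgue_integral_def by simp
  next
    case True
    have "\<not> set_integrable lborel {0<..x} Gf"
    proof
      assume i: "set_integrable lborel {0<..x} Gf"
      show False
      proof (cases "x \<le> 1")
        case True
        have "set_integrable lborel {x..1} Gf"
          by (rule borel_integrable_atLeastAtMost'[OF Gf_cont]) (use \<open>x > 0\<close> in simp)
        then have "set_integrable lborel ({0<..x} \<union> {x..1}) Gf"
          using i by (intro set_integrable_Un) auto
        moreover have "{0<..x} \<union> {x..1} = {0<..1::real}" using True \<open>x > 0\<close> by auto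
        ultimately show False using ni by simp
      next
        case False
        have "set_integrable lborel {0<..1} Gf"
          by (rule set_integrable_subset[OF i]) (use False in auto)
        then show False using ni by simp
      qed
    qed
    then show ?thesis unfolding GIn_def set_lebesgue_integral_def set_integrable_def
      by (rule not_integrable_integral_eq)
  qed
qed

lemma GI_deriv_case:
  assumes ii: "set_integrable lborel {0<..1} Gf" and x: "x > 0"
  shows "(GIn has_real_derivative Gf x) (at x)"
proof -
  define a where "a = x / 2"
  define b where "b = 2 * x"
  have a: "0 < a" "a < x" "x < b" unfolding a_def b_def using x by auto
  have ia: "set_integrable lborel {0<..a} Gf"
  proof (cases "a \<le> 1")
    case True
    show ?thesis by (rule set_integrable_subset[OF ii]) (use True in auto)
  next
    case False
    have "set_integrable lborel {1..a} Gf"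
      by (rule borel_integrable_atLeastAtMost'[OF Gf_cont]) simp
    then have "set_integrable lborel ({0<..1} \<union> {1..a}) Gf"
      using ii by (intro set_integrable_Un) auto
    moreover have "{0<..1} \<union> {1..a} = {0<..a}" using False by auto
    ultimately show ?thesis by simp
  qed
  have ia': "set_integrable lborel {0<..<a} Gf"
    by (rule set_integrable_subset[OF ia]) auto
  define C where "C = (\<integral>y\<in>{0<..<a}. Gf y \<partial>lborel)"
  have eq: "GIn y = C + integral {a..y} Gf" if y: "y \<in> {a<..<b}" for y
  proof -
    have iy: "set_integrable lborel {a..y} Gf"
      by (rule borel_integrable_atLeastAtMost'[OF Gf_cont]) (use a in simp)
    have U: "{0<..y} = {0<..<a} \<union> {a..y}" using y a by auto
    have "GIn y = (\<integral>t\<in>{0<..<a}. Gf t \<partial>lborel) + (\<integral>t\<in>{a..y}. Gf t \<partial>lborel)"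
      unfolding GIn_def U by (rule set_integral_Un) (use ia' iy in auto)
    also have "(\<integral>t\<in>{a..y}. Gf t \<partial>lborel) = integral {a..y} Gf"
      by (rule set_borel_integral_eq_integral(2)[OF iy])
    finally show ?thesis unfolding C_def .
  qed
  have "((\<lambda>u. integral {a..u} Gf) has_real_derivative Gf x) (at x within {a..b})"
    by (rule integral_has_real_derivative[OF Gf_cont]) (use a in auto)
  then have "((\<lambda>u. integral {a..u} Gf) has_real_derivative Gf x) (at x)"
    using at_within_Icc_at[of a x b] a by simp
  then have "((\<lambda>u. C + integral {a..u} Gf) has_real_derivative Gf x) (at x)"
    by (intro derivative_eq_intros) auto
  then show ?thesis
    by (rule has_field_derivative_transform_within_open[where S="{a<..<b}"]) (use a eq in auto)
qed

lemma GI_bernstein: "bernstein GIn"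
proof (cases "set_integrable lborel {0<..1} Gf")
  case True
  define S where "S n = (if n = 0 then GIn else gs psi pp (n - 1))" for n
  have "bernstein (S 0)"
  proof (rule bern_from_seq)
    fix n :: nat and x :: real assume x: "x > 0"
    show "(S n has_real_derivative S (Suc n) x) (at x)"
    proof (cases n)
      case 0
      then show ?thesis unfolding S_def using GI_deriv_case[OF True x] by (simp add: gs0)
    next
      case (Suc m)
      then show ?thesis unfolding S_def using gsd[OF x, of m] by simp
    qed
  next
    fix x :: real assume "x > 0" then show "S 0 x \<ge> 0" unfolding S_def using GI_nonneg by simp
  next
    fix n :: nat and x :: real assume "n \<ge> 1" "x > 0"
    then show "(-1) ^ (n - 1) * S n x \<ge> 0" unfolding S_def using gss by simp
  qed
  then show ?thesis unfolding S_def by simp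
next
  case False
  have "bernstein ((\<lambda>(n::nat) (x::real). 0::real) 0)"
    by (rule bern_from_seq) auto
  then show ?thesis using GI_zero_case[OF False] by simp
qed

end

theorem lemma2p8:
  fixes \<alpha> c d :: real and \<theta> \<psi> G GI :: "real \<Rightarrow> real" and \<phi> :: "real measure"
  assumes "0 < \<alpha>" "\<alpha> < 1" "c > 1"
    and "admissable \<alpha> c \<theta>"
    and "sets \<phi> = sets borel"
    and "emeasure \<phi> {..0} = 0"
    and "\<forall>t>0. emeasure \<phi> {t<..} = ennreal (t powr (-\<alpha>) * \<theta> (ln t))"
    and "\<psi> = (\<lambda>x. \<integral>t. (1 - exp (- x * t)) \<partial>\<phi>)"
    and "G = (\<lambda>x. 1 / \<psi> x)"
    and "GI = (\<lambda>x. \<integral>y\<in>{0<..x}. G y \<partial>lborel)"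
    and "d = c powr ((1 - \<alpha>) / \<alpha>)"
  shows "bernstein GI \<and> 0 < 1 - \<alpha> \<and> 1 - \<alpha> < 1 \<and> d > 1 \<and>
         (\<forall>x>0. GI (d powr (1 / (1 - \<alpha>)) * x) = d * GI x)"
proof -
  interpret S: setting \<alpha> c \<theta> \<phi>
    by unfold_locales (use assms(1-7) in auto)
  have psiE: "\<psi> = S.psi" unfolding assms(8) by (rule ext) (simp add: S.psi_def)
  have GE: "G = S.Gf" unfolding assms(9) psiE by (rule ext) (simp add: S.Gf_def)
  have GIE: "GI = S.GIn" unfolding assms(10) GE by (rule ext) (simp add: S.GIn_def)
  have d1: "d > 1"
  proof -
    have "c powr 0 < c powr ((1 - \<alpha>) / \<alpha>)"
      using assms(1-3) by (intro powr_less_mono) auto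
    then show ?thesis unfolding assms(11) using assms(3) by simp
  qed
  have dl: "d powr (1 / (1 - \<alpha>)) = S.lam"
    unfolding assms(11) S.lam_def powr_powr using assms(1,2) by simp
  have dc: "d = S.lam / c"
  proof -
    have "(1 - \<alpha>) / \<alpha> = 1 / \<alpha> - 1" using assms(1) by (simp add: field_simps)
    then show ?thesis unfolding assms(11) S.lam_def using assms(3) by (simp add: powr_diff)
  qed
  show ?thesis
  proof (intro conjI allI impI)
    show "bernstein GI" unfolding GIE by (rule S.GI_bernstein)
    show "0 < 1 - \<alpha>" "1 - \<alpha> < 1" using assms(1,2) by auto
    show "d > 1" by (rule d1)
    fix x :: real assume "x > 0"
    then show "GI (d powr (1 / (1 - \<alpha>)) * x) = d * GI x"
      unfolding GIE dl unfolding dc by (rule S.GI_scale)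
  qed
qed

end
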